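(* Let $(I,<,\mathcal X,R,\mathrm{Mor})$ be a regular groupoid spine. Then: (1) there is a symmetric set $S$ with $R\subseteq S\subseteq I^2$ such that $(I,<,\mathcal X,R,\mathrm{Mor})$ extends to $S$; (2) in particular, if $|I|\ge 3$ then $(I,<,\mathcal X,R,\mathrm{Mor})$ extends to a groupoid.
   Context: A groupoid spine $(I,<,\mathcal X,R,\mathrm{Mor})$ consists of a linear order $(I,<)$, nonempty sets $\mathcal X=\{X_i:i\in I\}$, a nonempty relation $R\subseteq I^2$ containing all $(i,j)$ with $i<j$, and for each $(i,j)\in R$ a nonempty set $\operatorname{Mor}(i,j)$ of bijections $X_i\to X_j$, such that: if $(i,i)\in R$ then $\mathrm{id}_{X_i}\in\operatorname{Mor}(i,i)$; if $(i,j),(j,i)\in R$ and $f\in\operatorname{Mor}(i,j)$ then $f^{-1}\in\operatorname{Mor}(j,i)$; if $(i,j),(j,k),(i,k)\in R$, $f\in\operatorname{Mor}(i,j)$, $g\in\operatorname{Mor}(j,k)$ then $g\circ f\in\operatorname{Mor}(i,k)$. It is regular if for all $(i,j)\in R$, $x\in X_i$, $y\in X_j$ there is exactly one $f\in\operatorname{Mor}(i,j)$ with $f(x)=y$. For $R\subseteq S\subseteq I^2$, the spine extends to $S$ if one can define $\operatorname{Mor}(i,j)$ for $(i,j)\in S\setminus R$ (keeping $\operatorname{Mor}(i,j)$ unchanged for $(i,j)\in R$) so that $(I,<,\mathcal X,S,\mathrm{Mor})$ is a groupoid spine; it extends to a groupoid if it extends to $S=I^2$. $S$ is symmetric if $(i,j)\in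 S$ implies $(j,i)\in S$. *)

theory Defs
  imports Main "HOL-Library.FuncSet"
begin

text \<open>Morphisms X_i to X_j are represented as extensional functions (value undefined
  outside X_i), so that equality of morphisms is equality as maps X_i to X_j.\<close>

definition strict_linear_on :: "'i set \<Rightarrow> ('i \<Rightarrow> 'i \<Rightarrow> bool) \<Rightarrow> bool" where
  "strict_linear_on I lt \<longleftrightarrow>
     (\<forall>i\<in>I. \<not> lt i i) \<and>
     (\<forall>i\<in>I. \<forall>j\<in>I. \<forall>k\<in>I. lt i j \<longrightarrow> lt j k \<longrightarrow> lt i k) \<and>
     (\<forall>i\<in>I. \<forall>j\<in>I. i \<noteq> j \<longrightarrow> lt i j \<or> lt j i)"

definition groupoid_spine ::
  "'i set \<Rightarrow> ('i \<Rightarrow> 'i \<Rightarrow> bool) \<Rightarrow> ('i \<Rightarrow> 'x set) \<Rightarrow> ('i \<times> 'i) set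
     \<Rightarrow> ('i \<Rightarrow> 'i \<Rightarrow> ('x \<Rightarrow> 'x) set) \<Rightarrow> bool" where
  "groupoid_spine I lt X R Mor \<longleftrightarrow>
     strict_linear_on I lt \<and>
     (\<forall>i\<in>I. X i \<noteq> {}) \<and>
     R \<noteq> {} \<and> R \<subseteq> I \<times> I \<and>
     (\<forall>i\<in>I. \<forall>j\<in>I. lt i j \<longrightarrow> (i, j) \<in> R) \<and>
     (\<forall>(i, j)\<in>R. Mor i j \<noteq> {} \<and>
        (\<forall>f\<in>Mor i j. f \<in> extensional (X i) \<and> bij_betw f (X i) (X j))) \<and>
     (\<forall>i. (i, i) \<in> R \<longrightarrow> (\<lambda>x\<in>X i. x) \<in> Mor i i) \<and>
     (\<forall>i j. (i, j) \<in> R \<longrightarrow> (j, i) \<in> R \<longrightarrow>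
        (\<forall>f\<in>Mor i j. restrict (inv_into (X i) f) (X j) \<in> Mor j i)) \<and>
     (\<forall>i j k. (i, j) \<in> R \<longrightarrow> (j, k) \<in> R \<longrightarrow> (i, k) \<in> R \<longrightarrow>
        (\<forall>f\<in>Mor i j. \<forall>g\<in>Mor j k. compose (X i) g f \<in> Mor i k))"

definition regular_spine ::
  "'i set \<Rightarrow> ('i \<Rightarrow> 'i \<Rightarrow> bool) \<Rightarrow> ('i \<Rightarrow> 'x set) \<Rightarrow> ('i \<times> 'i) set
     \<Rightarrow> ('i \<Rightarrow> 'i \<Rightarrow> ('x \<Rightarrow> 'x) set) \<Rightarrow> bool" where
  "regular_spine I lt X R Mor \<longleftrightarrow>
     groupoid_spine I lt X R Mor \<and>
     (\<forall>(i, j)\<in>R. \<forall>x\<in>X i. \<forall>y\<in>X j. \<exists>!f. f \<in> Mor i j \<and> f x = y)"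

definition extends_to ::
  "'i set \<Rightarrow> ('i \<Rightarrow> 'i \<Rightarrow> bool) \<Rightarrow> ('i \<Rightarrow> 'x set) \<Rightarrow> ('i \<times> 'i) set
     \<Rightarrow> ('i \<Rightarrow> 'i \<Rightarrow> ('x \<Rightarrow> 'x) set) \<Rightarrow> ('i \<times> 'i) set \<Rightarrow> bool" where
  "extends_to I lt X R Mor S \<longleftrightarrow>
     (\<exists>Mor'. (\<forall>(i, j)\<in>R. Mor' i j = Mor i j) \<and> groupoid_spine I lt X S Mor')"

definition extends_to_groupoid ::
  "'i set \<Rightarrow> ('i \<Rightarrow> 'i \<Rightarrow> bool) \<Rightarrow> ('i \<Rightarrow> 'x set) \<Rightarrow> ('i \<times> 'i) set
     \<Rightarrow> ('i \<Rightarrow> 'i \<Rightarrow> ('x \<Rightarrow> 'x) set) \<Rightarrow> bool" where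
  "extends_to_groupoid I lt X R Mor \<longleftrightarrow> extends_to I lt X R Mor (I \<times> I)"

end

theory Submission
  imports Defs
begin


definition isos :: "('i \<Rightarrow> 'x set) \<Rightarrow> 'i \<Rightarrow> 'i \<Rightarrow> ('x \<Rightarrow> 'x) set" where
  "isos X i j = {f. f \<in> extensional (X i) \<and> bij_betw f (X i) (X j)}"

definition iv :: "('i \<Rightarrow> 'x set) \<Rightarrow> 'i \<Rightarrow> 'i \<Rightarrow> ('x \<Rightarrow> 'x) \<Rightarrow> ('x \<Rightarrow> 'x)" where
  "iv X i j f = restrict (inv_into (X i) f) (X j)"

definition regset :: "('i \<Rightarrow> 'x set) \<Rightarrow> 'i \<Rightarrow> 'i \<Rightarrow> ('x \<Rightarrow> 'x) set \<Rightarrow> bool" where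
  "regset X i j A \<longleftrightarrow> A \<subseteq> isos X i j \<and> (\<forall>x\<in>X i. \<forall>y\<in>X j. \<exists>f\<in>A. f x = y)
     \<and> (\<forall>f\<in>A. \<forall>g\<in>A. \<forall>x\<in>X i. f x = g x \<longrightarrow> f = g)"

definition good :: "('i \<Rightarrow> 'i \<Rightarrow> ('x \<Rightarrow> 'x) set) \<Rightarrow> ('i \<Rightarrow> 'x set) \<Rightarrow> 'i \<Rightarrow> 'i \<Rightarrow> bool" where
  "good M X i j \<longleftrightarrow> regset X i j (M i j) \<and> (\<forall>f\<in>M i j. iv X i j f \<in> M j i)"

definition Ptri :: "('i \<Rightarrow> 'i \<Rightarrow> ('x \<Rightarrow> 'x) set) \<Rightarrow> ('i \<Rightarrow> 'x set) \<Rightarrow> 'i \<Rightarrow> 'i \<Rightarrow> 'i \<Rightarrow> bool" where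
  "Ptri M X i j k \<longleftrightarrow> (\<forall>f\<in>M i j. \<forall>g\<in>M j k. compose (X i) g f \<in> M i k)"

definition good6 where
  "good6 M X i j k \<longleftrightarrow> good M X i j \<and> good M X j i \<and> good M X j k \<and> good M X k j
     \<and> good M X i k \<and> good M X k i \<and> X i \<noteq> {} \<and> X j \<noteq> {} \<and> X k \<noteq> {}"

lemma good6_perm: "good6 M X i j k \<Longrightarrow> good6 M X k i j" "good6 M X i j k \<Longrightarrow> good6 M X k j i"
  unfolding good6_def by auto

lemma isos_ext: "f \<in> isos X i j \<Longrightarrow> f \<in> extensional (X i)" by (simp add: isos_def)
lemma isos_bij: "f \<in> isos X i j \<Longrightarrow> bij_betw f (X i) (X j)" by (simp add: isos_def)
lemma isos_mem: "f \<in> isos X i j \<Longrightarrow> x \<in> X i \<Longrightarrow> f x \<in> X j"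
  by (meson bij_betwE isos_bij)
lemma isos_inj: "f \<in> isos X i j \<Longrightarrow> x \<in> X i \<Longrightarrow> y \<in> X i \<Longrightarrow> f x = f y \<Longrightarrow> x = y"
  by (meson bij_betw_imp_inj_on inj_onD isos_bij)
lemma isos_eqI: "f \<in> isos X i j \<Longrightarrow> g \<in> isos X i j' \<Longrightarrow> (\<And>x. x \<in> X i \<Longrightarrow> f x = g x) \<Longrightarrow> f = g"
  by (meson extensionalityI isos_ext)
lemma iv_isos: "f \<in> isos X i j \<Longrightarrow> iv X i j f \<in> isos X j i"
proof -
  assume f: "f \<in> isos X i j"
  have b: "bij_betw (inv_into (X i) f) (X j) (X i)" using bij_betw_inv_into[OF isos_bij[OF f]] .
  have e: "bij_betw (restrict (inv_into (X i) f) (X j)) (X j) (X i) = bij_betw (inv_into (X i) f) (X j) (X i)"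
    by (rule bij_betw_cong) simp
  show ?thesis unfolding isos_def iv_def using b e by (simp add: compose_eq)
qed
lemma iv_left: "f \<in> isos X i j \<Longrightarrow> x \<in> X i \<Longrightarrow> iv X i j f (f x) = x"
proof -
  assume f: "f \<in> isos X i j" and x: "x \<in> X i"
  have "f x \<in> X j" using isos_mem[OF f x] .
  then show ?thesis unfolding iv_def using bij_betw_inv_into_left[OF isos_bij[OF f] x] by (simp add: compose_eq)
qed
lemma iv_right: "f \<in> isos X i j \<Longrightarrow> y \<in> X j \<Longrightarrow> f (iv X i j f y) = y"
proof -
  assume f: "f \<in> isos X i j" and y: "y \<in> X j"
  show ?thesis unfolding iv_def using bij_betw_inv_into_right[OF isos_bij[OF f] y] y by (simp add: compose_eq)
qed
lemma iv_iv: "f \<in> isos X i j \<Longrightarrow> iv X j i (iv X i j f) = f"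
proof -
  assume f: "f \<in> isos X i j"
  have g: "iv X i j f \<in> isos X j i" using iv_isos[OF f] .
  show ?thesis
  proof (rule isos_eqI[OF iv_isos[OF g] f])
    fix x assume x: "x \<in> X i"
    have "iv X j i (iv X i j f) (iv X i j f (f x)) = f x" using iv_left[OF g isos_mem[OF f x]] .
    then show "iv X j i (iv X i j f) x = f x" using iv_left[OF f x] by (simp add: compose_eq)
  qed
qed
lemma compose_isos: "f \<in> isos X i j \<Longrightarrow> g \<in> isos X j k \<Longrightarrow> compose (X i) g f \<in> isos X i k"
proof -
  assume f: "f \<in> isos X i j" and g: "g \<in> isos X j k"
  have b: "bij_betw (g \<circ> f) (X i) (X k)" using bij_betw_trans[OF isos_bij[OF f] isos_bij[OF g]] .
  have e: "bij_betw (compose (X i) g f) (X i) (X k) = bij_betw (g \<circ> f) (X i) (X k)"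
    by (rule bij_betw_cong) (simp add: compose_eq)
  show ?thesis unfolding isos_def using b e by (simp add: compose_eq)
qed
lemma id_isos: "(\<lambda>x\<in>X i. x) \<in> isos X i i"
proof -
  have e: "bij_betw (\<lambda>x\<in>X i. x) (X i) (X i) = bij_betw id (X i) (X i)"
    by (rule bij_betw_cong) simp
  show ?thesis unfolding isos_def using e by (simp add: compose_eq)
qed


lemma regset_sub: "regset X i j A \<Longrightarrow> f \<in> A \<Longrightarrow> f \<in> isos X i j"
  unfolding regset_def by (elim conjE) (rule subsetD)
lemma regset_ex: "regset X i j A \<Longrightarrow> x \<in> X i \<Longrightarrow> y \<in> X j \<Longrightarrow> \<exists>f\<in>A. f x = y"
  unfolding regset_def by (elim conjE) (drule bspec, assumption, drule bspec, assumption, assumption)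
lemma regset_uniq: "regset X i j A \<Longrightarrow> f \<in> A \<Longrightarrow> g \<in> A \<Longrightarrow> x \<in> X i \<Longrightarrow> f x = g x \<Longrightarrow> f = g"
  unfolding regset_def by (elim conjE) (drule bspec, assumption, drule bspec, assumption, drule bspec, assumption, erule mp, assumption)

lemma good_reg: "good M X i j \<Longrightarrow> regset X i j (M i j)" by (simp add: good_def)
lemma good_iso: "good M X i j \<Longrightarrow> f \<in> M i j \<Longrightarrow> f \<in> isos X i j"
  by (erule regset_sub[OF good_reg])
lemma good_inv: "good M X i j \<Longrightarrow> f \<in> M i j \<Longrightarrow> iv X i j f \<in> M j i"
  by (simp add: good_def)

lemma regsetI:
  assumes "A \<subseteq> isos X i j" "\<And>x y. x \<in> X i \<Longrightarrow> y \<in> X j \<Longrightarrow> \<exists>f\<in>A. f x = y"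
    "\<And>f g x. f \<in> A \<Longrightarrow> g \<in> A \<Longrightarrow> x \<in> X i \<Longrightarrow> f x = g x \<Longrightarrow> f = g"
  shows "regset X i j A"
  unfolding regset_def apply (intro conjI ballI impI)
    apply (rule assms(1))
   apply (erule (1) assms(2))
  apply (erule (3) assms(3))
  done

lemma regset_iv:
  assumes r: "regset X j i A" shows "regset X i j (iv X j i ` A)"
proof (rule regsetI)
  show "iv X j i ` A \<subseteq> isos X i j"
  proof
    fix h assume "h \<in> iv X j i ` A"
    then obtain g where "g \<in> A" "h = iv X j i g" by blast
    then show "h \<in> isos X i j" using iv_isos[OF regset_sub[OF r]] by (simp add: compose_eq)
  qed
next
  fix x y assume x: "x \<in> X i" and y: "y \<in> X j"
  obtain g where g: "g \<in> A" "g y = x" using regset_ex[OF r y x] by blast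
  have "iv X j i g (g y) = y" using iv_left[OF regset_sub[OF r g(1)] y] .
  then have "iv X j i g x = y" using g(2) by (simp add: compose_eq)
  then show "\<exists>f\<in>iv X j i ` A. f x = y" using g(1) by blast
next
  fix f g x assume f: "f \<in> iv X j i ` A" and g: "g \<in> iv X j i ` A" and x: "x \<in> X i"
    and e: "f x = g x"
  obtain f0 where f0: "f0 \<in> A" and f0e: "f = iv X j i f0" using f by blast
  obtain g0 where g0: "g0 \<in> A" and g0e: "g = iv X j i g0" using g by blast
  have f0i: "f0 \<in> isos X j i" using regset_sub[OF r f0] .
  have g0i: "g0 \<in> isos X j i" using regset_sub[OF r g0] .
  have y: "f x \<in> X j" using isos_mem[OF iv_isos[OF f0i] x] f0e by (simp add: compose_eq)
  have 1: "f0 (f x) = x" using iv_right[OF f0i x] f0e by (simp add: compose_eq)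
  have 2: "g0 (f x) = x" using iv_right[OF g0i x] g0e e by (simp add: compose_eq)
  have "f0 = g0" using regset_uniq[OF r f0 g0 y] 1 2 by (simp add: compose_eq)
  then show "f = g" using f0e g0e by (simp add: compose_eq)
qed

lemma rot_lemma:
  assumes g6: "good6 M X i j k" and P: "Ptri M X i j k"
  shows "Ptri M X k i j"
  unfolding Ptri_def
proof (intro ballI)
  fix a f assume a: "a \<in> M k i" and f: "f \<in> M i j"
  have gkj: "good M X k j" and gki: "good M X k i" and gik: "good M X i k" and gij: "good M X i j"
    and ne: "X k \<noteq> {}" using g6 unfolding good6_def by simp_all
  from ne obtain x where x: "x \<in> X k" by blast
  have aI: "a \<in> isos X k i" using good_iso[OF gki a] .
  have fI: "f \<in> isos X i j" using good_iso[OF gij f] .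
  have ax: "a x \<in> X i" using isos_mem[OF aI x] .
  have fax: "f (a x) \<in> X j" using isos_mem[OF fI ax] .
  obtain c where c: "c \<in> M k j" "c x = f (a x)" using regset_ex[OF good_reg[OF gkj] x fax] by blast
  have cI: "c \<in> isos X k j" using good_iso[OF gkj c(1)] .
  have c': "iv X k j c \<in> M j k" using good_inv[OF gkj c(1)] .
  have h: "compose (X i) (iv X k j c) f \<in> M i k" using P f c' unfolding Ptri_def by blast
  have e: "iv X k i a \<in> M i k" using good_inv[OF gki a] .
  have "compose (X i) (iv X k j c) f (a x) = iv X k i a (a x)"
    using ax ax iv_left[OF cI x] iv_left[OF aI x] c(2) by (simp add: compose_eq)
  hence eq: "compose (X i) (iv X k j c) f = iv X k i a"
    using regset_uniq[OF good_reg[OF gik] h e ax] by blast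
  have "compose (X k) f a = c"
  proof (rule isos_eqI[OF compose_isos[OF aI fI] cI])
    fix z assume z: "z \<in> X k"
    have az: "a z \<in> X i" using isos_mem[OF aI z] .
    have faz: "f (a z) \<in> X j" using isos_mem[OF fI az] .
    have "iv X k j c (f (a z)) = z"
      using fun_cong[OF eq, of "a z"] az iv_left[OF aI z] by (simp add: compose_eq)
    then have "c (iv X k j c (f (a z))) = c z" by (simp add: compose_eq)
    then show "compose (X k) f a z = c z" using iv_right[OF cI faz] z by (simp add: compose_eq)
  qed
  then show "compose (X k) f a \<in> M k j" using c by (simp add: compose_eq)
qed

lemma rev_lemma:
  assumes g6: "good6 M X i j k" and P: "Ptri M X i j k"
  shows "Ptri M X k j i"
  unfolding Ptri_def
proof (intro ballI)
  fix u v assume u: "u \<in> M k j" and v: "v \<in> M j i"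
  have gkj: "good M X k j" and gji: "good M X j i" and gik: "good M X i k"
    using g6 unfolding good6_def by simp_all
  have uI: "u \<in> isos X k j" using good_iso[OF gkj u] .
  have vI: "v \<in> isos X j i" using good_iso[OF gji v] .
  have u': "iv X k j u \<in> M j k" using good_inv[OF gkj u] .
  have v': "iv X j i v \<in> M i j" using good_inv[OF gji v] .
  define h where "h = compose (X i) (iv X k j u) (iv X j i v)"
  have h: "h \<in> M i k" using P u' v' unfolding Ptri_def h_def by blast
  have hI: "h \<in> isos X i k" using good_iso[OF gik h] .
  have hh: "iv X i k h \<in> M k i" using good_inv[OF gik h] .
  have "compose (X k) v u = iv X i k h"
  proof (rule isos_eqI[OF compose_isos[OF uI vI] iv_isos[OF hI]])
    fix z assume z: "z \<in> X k"
    have uz: "u z \<in> X j" using isos_mem[OF uI z] .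
    have vuz: "v (u z) \<in> X i" using isos_mem[OF vI uz] .
    have "h (v (u z)) = z" unfolding h_def
      using vuz iv_left[OF vI uz] iv_left[OF uI z] by (simp add: compose_eq)
    then have "iv X i k h z = v (u z)" using iv_left[OF hI vuz] by (simp add: compose_eq)
    then show "compose (X k) v u z = iv X i k h z" using z by (simp add: compose_eq)
  qed
  then show "compose (X k) v u \<in> M k i" using hh by (simp add: compose_eq)
qed

lemma perm_all:
  assumes g6: "good6 M X i j k"
    and P: "Ptri M X i j k \<or> Ptri M X i k j \<or> Ptri M X j i k \<or> Ptri M X j k i
       \<or> Ptri M X k i j \<or> Ptri M X k j i"
  shows "Ptri M X i j k"
proof -
  have kij: "good6 M X k i j" using good6_perm(1)[OF g6] .
  have jki: "good6 M X j k i" using good6_perm(1)[OF kij] .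
  have kji: "good6 M X k j i" using good6_perm(2)[OF g6] .
  have ikj: "good6 M X i k j" using good6_perm(1)[OF kji] .
  have jik: "good6 M X j i k" using good6_perm(1)[OF ikj] .
  show ?thesis using P
  proof (elim disjE)
    assume "Ptri M X i k j" then show ?thesis using rot_lemma[OF jki rev_lemma[OF ikj]] by simp
  next
    assume "Ptri M X j i k" then show ?thesis using rev_lemma[OF kji rot_lemma[OF jik]] by simp
  next
    assume "Ptri M X j k i" then show ?thesis using rot_lemma[OF jki] by simp
  next
    assume "Ptri M X k i j" then show ?thesis using rot_lemma[OF jki rot_lemma[OF kij]] by simp
  next
    assume "Ptri M X k j i" then show ?thesis using rev_lemma[OF kji] by simp
  qed
qed



definition Mor1 where
  "Mor1 R X Mor i j = (if (i, j) \<in> R then Mor i j else iv X j i ` Mor j i)"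

definition Rtri where
  "Rtri R a b c \<longleftrightarrow> (a, b) \<in> R \<and> (b, c) \<in> R \<and> (a, c) \<in> R"

lemma regset_eq:
  assumes ne: "X i \<noteq> {}" and A: "regset X i j A" and B: "regset X i j B" and sub: "A \<subseteq> B"
  shows "A = B"
proof
  show "A \<subseteq> B" by (rule sub)
  show "B \<subseteq> A"
  proof
    fix b assume b: "b \<in> B"
    obtain x where x: "x \<in> X i" using ne by blast
    have bx: "b x \<in> X j" using isos_mem[OF regset_sub[OF B b] x] .
    obtain a where a: "a \<in> A" "a x = b x" using regset_ex[OF A x bx] by blast
    have aB: "a \<in> B" using a(1) sub by blast
    have "a = b" using regset_uniq[OF B aB b x a(2)] .
    then show "b \<in> A" using a(1) by simp
  qed
qed

definition H1 where
  "H1 I X M i = {f \<in> isos X i i. \<forall>j\<in>I. j \<noteq> i \<longrightarrow> (\<forall>a\<in>M i j. compose (X i) a f \<in> M i j)}"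

definition Mor2 where
  "Mor2 I X M i j = (if i = j then H1 I X M i else M i j)"

lemma H_mem: "f \<in> H1 I X M i \<Longrightarrow> f \<in> isos X i i"
  "f \<in> H1 I X M i \<Longrightarrow> j \<in> I \<Longrightarrow> j \<noteq> i \<Longrightarrow> a \<in> M i j \<Longrightarrow> compose (X i) a f \<in> M i j"
  by (simp_all add: H1_def)

lemma H_I: "f \<in> isos X i i \<Longrightarrow> (\<And>j a. j \<in> I \<Longrightarrow> j \<noteq> i \<Longrightarrow> a \<in> M i j \<Longrightarrow> compose (X i) a f \<in> M i j)
  \<Longrightarrow> f \<in> H1 I X M i"
  by (simp add: H1_def)

lemma three_lemma:
  assumes "infinite I \<or> 3 \<le> card I" shows "\<forall>i\<in>I. \<forall>j\<in>I. \<exists>l\<in>I. l \<noteq> i \<and> l \<noteq> j"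
proof (intro ballI)
  fix i j assume "i \<in> I" "j \<in> I"
  show "\<exists>l\<in>I. l \<noteq> i \<and> l \<noteq> j"
  proof (rule ccontr)
    assume "\<not> (\<exists>l\<in>I. l \<noteq> i \<and> l \<noteq> j)"
    then have sub: "I \<subseteq> {i, j}" by blast
    then have fin: "finite I" using finite_subset by blast
    have "card I \<le> card {i, j}" using card_mono[OF _ sub] by simp
    also have "card {i, j} \<le> 2" by (cases "i = j") simp_all
    finally show False using assms fin by simp
  qed
qed

context
  fixes I :: "'i set" and lt :: "'i \<Rightarrow> 'i \<Rightarrow> bool" and X :: "'i \<Rightarrow> 'x set"
    and R :: "('i \<times> 'i) set" and Mor :: "'i \<Rightarrow> 'i \<Rightarrow> ('x \<Rightarrow> 'x) set"
  assumes reg: "regular_spine I lt X R Mor"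
begin

lemma sp: "groupoid_spine I lt X R Mor" using reg unfolding regular_spine_def by simp
lemma lin: "strict_linear_on I lt" using sp unfolding groupoid_spine_def by simp
lemma Xne: "i \<in> I \<Longrightarrow> X i \<noteq> {}" using sp unfolding groupoid_spine_def by simp
lemma Rsub: "R \<subseteq> I \<times> I" using sp unfolding groupoid_spine_def by simp
lemma Rne: "R \<noteq> {}" using sp unfolding groupoid_spine_def by simp
lemma ltR: "i \<in> I \<Longrightarrow> j \<in> I \<Longrightarrow> lt i j \<Longrightarrow> (i, j) \<in> R"
  using sp unfolding groupoid_spine_def by simp
lemma Mid: "(i, i) \<in> R \<Longrightarrow> (\<lambda>x\<in>X i. x) \<in> Mor i i"
  using sp unfolding groupoid_spine_def by simp
lemma Minv: "(i, j) \<in> R \<Longrightarrow> (j, i) \<in> R \<Longrightarrow> f \<in> Mor i j \<Longrightarrow> iv X i j f \<in> Mor j i"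
  using sp unfolding groupoid_spine_def iv_def by simp
lemma Mcomp: "(i, j) \<in> R \<Longrightarrow> (j, k) \<in> R \<Longrightarrow> (i, k) \<in> R \<Longrightarrow> Ptri Mor X i j k"
  using sp unfolding groupoid_spine_def Ptri_def by simp
lemma RI: "(i, j) \<in> R \<Longrightarrow> i \<in> I \<and> j \<in> I" using Rsub by blast

lemma Mreg: assumes ij: "(i, j) \<in> R" shows "regset X i j (Mor i j)"
proof -
  have A: "\<forall>f\<in>Mor i j. f \<in> extensional (X i) \<and> bij_betw f (X i) (X j)"
    using sp ij unfolding groupoid_spine_def by fast
  have B: "\<forall>x\<in>X i. \<forall>y\<in>X j. \<exists>!f. f \<in> Mor i j \<and> f x = y"
    using reg ij unfolding regular_spine_def by fast
  show ?thesis
  proof (rule regsetI)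
    show "Mor i j \<subseteq> isos X i j" using A unfolding isos_def by blast
    fix x y assume "x \<in> X i" "y \<in> X j"
    then show "\<exists>f\<in>Mor i j. f x = y" using B by blast
  next
    fix f g x assume "f \<in> Mor i j" "g \<in> Mor i j" "x \<in> X i" "f x = g x"
    then show "f = g" using B
      by (metis (no_types, lifting) A bij_betwE) 
  qed
qed

lemma lin_tot: "i \<in> I \<Longrightarrow> j \<in> I \<Longrightarrow> i \<noteq> j \<Longrightarrow> lt i j \<or> lt j i"
  using lin unfolding strict_linear_on_def by blast
lemma lin_irr: "i \<in> I \<Longrightarrow> \<not> lt i i"
  using lin unfolding strict_linear_on_def by blast
lemma lin_trans: "i \<in> I \<Longrightarrow> j \<in> I \<Longrightarrow> k \<in> I \<Longrightarrow> lt i j \<Longrightarrow> lt j k \<Longrightarrow> lt i k"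
  using lin unfolding strict_linear_on_def by blast

lemma offR: "i \<in> I \<Longrightarrow> j \<in> I \<Longrightarrow> i \<noteq> j \<Longrightarrow> (i, j) \<in> R \<or> (j, i) \<in> R"
  using lin_tot ltR by blast

lemma Mor1_R: "(i, j) \<in> R \<Longrightarrow> Mor1 R X Mor i j = Mor i j" by (simp add: Mor1_def)

lemma Mor1_conv: assumes ji: "(j, i) \<in> R" shows "Mor1 R X Mor i j = iv X j i ` Mor j i"
proof (cases "(i, j) \<in> R")
  case True
  have ne: "X i \<noteq> {}" using RI[OF ji] Xne by blast
  have "iv X j i ` Mor j i \<subseteq> Mor i j" using Minv[OF ji True] by blast
  then have "iv X j i ` Mor j i = Mor i j"
    by (rule regset_eq[OF ne regset_iv[OF Mreg[OF ji]] Mreg[OF True]])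
  then show ?thesis using True by (simp add: Mor1_def)
next
  case False then show ?thesis by (simp add: Mor1_def)
qed

lemma good1: assumes S: "(i, j) \<in> R \<union> converse R" shows "good (Mor1 R X Mor) X i j"
proof -
  have c: "(i, j) \<in> R \<or> (j, i) \<in> R" using S by blast
  have r: "regset X i j (Mor1 R X Mor i j)"
  proof (cases "(i, j) \<in> R")
    case True then show ?thesis using Mreg[OF True] Mor1_R[OF True] by simp
  next
    case False then have ji: "(j, i) \<in> R" using c by blast
    then show ?thesis using Mor1_conv[OF ji] regset_iv[OF Mreg[OF ji]] by simp
  qed
  have inv: "\<forall>f\<in>Mor1 R X Mor i j. iv X i j f \<in> Mor1 R X Mor j i"
  proof
    fix f assume f: "f \<in> Mor1 R X Mor i j"
    show "iv X i j f \<in> Mor1 R X Mor j i"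
    proof (cases "(i, j) \<in> R")
      case True
      then have "f \<in> Mor i j" using f Mor1_R[OF True] by simp
      then show ?thesis using Mor1_conv[OF True] by simp
    next
      case False then have ji: "(j, i) \<in> R" using c by blast
      then obtain g where g: "g \<in> Mor j i" "f = iv X j i g" using f Mor1_conv[OF ji] by auto
      have gi: "g \<in> isos X j i" using regset_sub[OF Mreg[OF ji] g(1)] .
      have "iv X i j f = g" using g(2) iv_iv[OF gi] by simp
      then show ?thesis using g(1) Mor1_R[OF ji] by simp
    qed
  qed
  show ?thesis using r inv unfolding good_def by simp
qed

lemma lt3: "a \<in> I \<Longrightarrow> b \<in> I \<Longrightarrow> c \<in> I \<Longrightarrow> lt a b \<Longrightarrow> lt b c \<Longrightarrow> Rtri R a b c"
  unfolding Rtri_def using ltR lin_trans by blast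

lemma sortR:
  assumes I: "i \<in> I" "j \<in> I" "k \<in> I"
    and S: "(i, j) \<in> R \<union> converse R" "(j, k) \<in> R \<union> converse R" "(i, k) \<in> R \<union> converse R"
  shows "Rtri R i j k \<or> Rtri R i k j \<or> Rtri R j i k \<or> Rtri R j k i \<or> Rtri R k i j \<or> Rtri R k j i"
proof -
  have c1: "(i, j) \<in> R \<or> (j, i) \<in> R" using S by blast
  have c2: "(j, k) \<in> R \<or> (k, j) \<in> R" using S by blast
  have c3: "(i, k) \<in> R \<or> (k, i) \<in> R" using S by blast
  show ?thesis
  proof (cases "i = j")
    case ij: True
    show ?thesis
    proof (cases "i = k")
      case True then show ?thesis using ij c1 by (simp add: Rtri_def)
    next
      case False
      have ii: "(i, i) \<in> R" using c1 ij by simp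
      show ?thesis using c3 ii ij by (auto simp: Rtri_def)
    qed
  next
    case nij: False
    show ?thesis
    proof (cases "j = k")
      case jk: True
      have jj: "(j, j) \<in> R" using c2 jk by simp
      show ?thesis using c1 jj jk by (auto simp: Rtri_def)
    next
      case njk: False
      show ?thesis
      proof (cases "i = k")
        case ik: True
        have ii: "(i, i) \<in> R" using c3 ik by simp
        show ?thesis using c1 ii ik by (auto simp: Rtri_def)
      next
        case nik: False
        show ?thesis
        proof (cases "lt i j")
          case lij: True
          show ?thesis
          proof (cases "lt j k")
            case True then show ?thesis using lt3[OF I lij] by simp
          next
            case False then have lkj: "lt k j" using lin_tot[OF I(2,3) njk] by simp
            show ?thesis
            proof (cases "lt i k")
              case True then show ?thesis using lt3[OF I(1,3,2) True lkj] by simp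
            next
              case False then have "lt k i" using lin_tot[OF I(1,3) nik] by simp
              then show ?thesis using lt3[OF I(3,1,2) _ lij] by simp
            qed
          qed
        next
          case False then have lji: "lt j i" using lin_tot[OF I(1,2) nij] by simp
          show ?thesis
          proof (cases "lt i k")
            case True then show ?thesis using lt3[OF I(2,1,3) lji] by simp
          next
            case False then have lki: "lt k i" using lin_tot[OF I(1,3) nik] by simp
            show ?thesis
            proof (cases "lt j k")
              case True then show ?thesis using lt3[OF I(2,3,1) True lki] by simp
            next
              case False then have "lt k j" using lin_tot[OF I(2,3) njk] by simp
              then show ?thesis using lt3[OF I(3,2,1) _ lji] by simp
            qed
          qed
        qed
      qed
    qed
  qed
qed

lemma RP: assumes "Rtri R a b c" shows "Ptri (Mor1 R X Mor) X a b c"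
proof -
  have h: "(a, b) \<in> R" "(b, c) \<in> R" "(a, c) \<in> R" using assms unfolding Rtri_def by simp_all
  have "Ptri Mor X a b c" by (rule Mcomp[OF h])
  then show ?thesis unfolding Ptri_def using Mor1_R[OF h(1)] Mor1_R[OF h(2)] Mor1_R[OF h(3)] by simp
qed

lemma comp1:
  assumes S: "(i, j) \<in> R \<union> converse R" "(j, k) \<in> R \<union> converse R" "(i, k) \<in> R \<union> converse R"
  shows "Ptri (Mor1 R X Mor) X i j k"
proof -
  have I: "i \<in> I" "j \<in> I" "k \<in> I" using S Rsub by auto
  have S': "(j, i) \<in> R \<union> converse R" "(k, j) \<in> R \<union> converse R" "(k, i) \<in> R \<union> converse R"
    using S by auto
  have g6: "good6 (Mor1 R X Mor) X i j k" unfolding good6_def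
    using good1[OF S(1)] good1[OF S(2)] good1[OF S(3)] good1[OF S'(1)] good1[OF S'(2)] good1[OF S'(3)]
      Xne[OF I(1)] Xne[OF I(2)] Xne[OF I(3)] by simp
  show ?thesis
    apply (rule perm_all[OF g6])
    using sortR[OF I S] by (elim disjE) (simp_all add: RP)
qed

lemma spine1: "groupoid_spine I lt X (R \<union> converse R) (Mor1 R X Mor)"
proof -
  let ?S = "R \<union> converse R"
  let ?M = "Mor1 R X Mor"
  have h1: "strict_linear_on I lt" by (rule lin)
  have h2: "\<forall>i\<in>I. X i \<noteq> {}" using Xne by blast
  have h3: "?S \<noteq> {}" using Rne by blast
  have h4: "?S \<subseteq> I \<times> I" using Rsub by blast
  have h5: "\<forall>i\<in>I. \<forall>j\<in>I. lt i j \<longrightarrow> (i, j) \<in> ?S" using ltR by blast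
  have h6': "?M i j \<noteq> {} \<and> (\<forall>f\<in>?M i j. f \<in> extensional (X i) \<and> bij_betw f (X i) (X j))"
    if ij: "(i, j) \<in> ?S" for i j
  proof -
    have I: "i \<in> I" "j \<in> I" using ij Rsub by auto
    have r: "regset X i j (?M i j)" using good_reg[OF good1[OF ij]] .
    obtain x where x: "x \<in> X i" using Xne[OF I(1)] by blast
    obtain y where y: "y \<in> X j" using Xne[OF I(2)] by blast
    have "?M i j \<noteq> {}" using regset_ex[OF r x y] by blast
    moreover have "\<forall>f\<in>?M i j. f \<in> extensional (X i) \<and> bij_betw f (X i) (X j)"
      using regset_sub[OF r] unfolding isos_def by blast
    ultimately show ?thesis by simp
  qed
  have h6: "\<forall>(i, j)\<in>?S. ?M i j \<noteq> {} \<and> (\<forall>f\<in>?M i j. f \<in> extensional (X i) \<and> bij_betw f (X i) (X j))"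
    apply (rule ballI)
    apply (subst case_prod_beta)
    apply (rule h6')
    apply simp
    done
  have h7: "\<forall>i. (i, i) \<in> ?S \<longrightarrow> (\<lambda>x\<in>X i. x) \<in> ?M i i"
  proof (intro allI impI)
    fix i assume "(i, i) \<in> ?S"
    then have ii: "(i, i) \<in> R" by blast
    show "(\<lambda>x\<in>X i. x) \<in> ?M i i" using Mid[OF ii] Mor1_R[OF ii] by simp
  qed
  have h8: "\<forall>i j. (i, j) \<in> ?S \<longrightarrow> (j, i) \<in> ?S \<longrightarrow>
        (\<forall>f\<in>?M i j. restrict (inv_into (X i) f) (X j) \<in> ?M j i)"
  proof (intro allI impI)
    fix i j assume ij: "(i, j) \<in> ?S" and "(j, i) \<in> ?S"
    show "\<forall>f\<in>?M i j. restrict (inv_into (X i) f) (X j) \<in> ?M j i"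
      using good_inv[OF good1[OF ij]] unfolding iv_def by blast
  qed
  have h9: "\<forall>i j k. (i, j) \<in> ?S \<longrightarrow> (j, k) \<in> ?S \<longrightarrow> (i, k) \<in> ?S \<longrightarrow>
        (\<forall>f\<in>?M i j. \<forall>g\<in>?M j k. compose (X i) g f \<in> ?M i k)"
  proof (intro allI impI)
    fix i j k assume a: "(i, j) \<in> ?S" and b: "(j, k) \<in> ?S" and c: "(i, k) \<in> ?S"
    show "\<forall>f\<in>?M i j. \<forall>g\<in>?M j k. compose (X i) g f \<in> ?M i k"
      using comp1[OF a b c] unfolding Ptri_def .
  qed
  show ?thesis unfolding groupoid_spine_def
    by (intro conjI h1 h2 h3 h4 h5 h6 h7 h8 h9)
qed

lemma part1: "\<exists>S. sym S \<and> R \<subseteq> S \<and> S \<subseteq> I \<times> I \<and> extends_to I lt X R Mor S"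
proof (intro exI conjI)
  show "sym (R \<union> converse R)" unfolding sym_def by blast
  show "R \<subseteq> R \<union> converse R" by blast
  show "R \<union> converse R \<subseteq> I \<times> I" using Rsub by blast
  show "extends_to I lt X R Mor (R \<union> converse R)" unfolding extends_to_def
  proof (intro exI conjI)
    show "\<forall>(i, j)\<in>R. Mor1 R X Mor i j = Mor i j" using Mor1_R by blast
    show "groupoid_spine I lt X (R \<union> converse R) (Mor1 R X Mor)" by (rule spine1)
  qed
qed

lemma offS: "i \<in> I \<Longrightarrow> j \<in> I \<Longrightarrow> i \<noteq> j \<Longrightarrow> (i, j) \<in> R \<union> converse R"
  using offR by blast

context
  assumes three: "\<forall>i\<in>I. \<forall>j\<in>I. \<exists>l\<in>I. l \<noteq> i \<and> l \<noteq> j"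
begin

lemma other: "i \<in> I \<Longrightarrow> \<exists>j\<in>I. j \<noteq> i" using three by blast
lemma other2: "i \<in> I \<Longrightarrow> j \<in> I \<Longrightarrow> \<exists>l\<in>I. l \<noteq> i \<and> l \<noteq> j" using three by blast

lemma goodM1: "i \<in> I \<Longrightarrow> j \<in> I \<Longrightarrow> i \<noteq> j \<Longrightarrow> good (Mor1 R X Mor) X i j"
  by (rule good1[OF offS])

lemma PM1: "i \<in> I \<Longrightarrow> j \<in> I \<Longrightarrow> k \<in> I \<Longrightarrow> i \<noteq> j \<Longrightarrow> j \<noteq> k \<Longrightarrow> i \<noteq> k
  \<Longrightarrow> Ptri (Mor1 R X Mor) X i j k"
  by (rule comp1[OF offS offS offS])

lemma M1ne: assumes i: "i \<in> I" and j: "j \<in> I" and ij: "i \<noteq> j" shows "\<exists>a. a \<in> Mor1 R X Mor i j"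
proof -
  obtain x where x: "x \<in> X i" using Xne[OF i] by blast
  obtain y where y: "y \<in> X j" using Xne[OF j] by blast
  show ?thesis using regset_ex[OF good_reg[OF goodM1[OF i j ij]] x y] by blast
qed

lemma H_id: assumes i: "i \<in> I" shows "(\<lambda>x\<in>X i. x) \<in> H1 I X (Mor1 R X Mor) i"
proof (rule H_I[OF id_isos])
  fix j a assume j: "j \<in> I" "j \<noteq> i" and a: "a \<in> Mor1 R X Mor i j"
  have ij: "i \<noteq> j" using j(2) by simp
  have aI: "a \<in> isos X i j" using good_iso[OF goodM1[OF i j(1) ij] a] .
  have "compose (X i) a (\<lambda>x\<in>X i. x) = a"
    by (rule isos_eqI[OF compose_isos[OF id_isos aI] aI]) (simp add: compose_eq)
  then show "compose (X i) a (\<lambda>x\<in>X i. x) \<in> Mor1 R X Mor i j" using a by simp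
qed

lemma H_uniq:
  assumes i: "i \<in> I" and f: "f \<in> H1 I X (Mor1 R X Mor) i" and g: "g \<in> H1 I X (Mor1 R X Mor) i"
    and x: "x \<in> X i" and e: "f x = g x"
  shows "f = g"
proof -
  obtain j where j: "j \<in> I" "j \<noteq> i" using other[OF i] by blast
  have ij: "i \<noteq> j" using j(2) by simp
  have gd: "good (Mor1 R X Mor) X i j" using goodM1[OF i j(1) ij] .
  obtain a where a: "a \<in> Mor1 R X Mor i j" using M1ne[OF i j(1) ij] by blast
  have aI: "a \<in> isos X i j" using good_iso[OF gd a] .
  have fI: "f \<in> isos X i i" using H_mem(1)[OF f] .
  have gI: "g \<in> isos X i i" using H_mem(1)[OF g] .
  have af: "compose (X i) a f \<in> Mor1 R X Mor i j" using H_mem(2)[OF f j(1) j(2) a] .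
  have ag: "compose (X i) a g \<in> Mor1 R X Mor i j" using H_mem(2)[OF g j(1) j(2) a] .
  have "compose (X i) a f x = compose (X i) a g x" using e x by (simp add: compose_eq)
  then have eq: "compose (X i) a f = compose (X i) a g" using regset_uniq[OF good_reg[OF gd] af ag x] by simp
  show "f = g"
  proof (rule isos_eqI[OF fI gI])
    fix z assume z: "z \<in> X i"
    have "a (f z) = a (g z)" using fun_cong[OF eq, of z] z by (simp add: compose_eq)
    then show "f z = g z" using isos_inj[OF aI isos_mem[OF fI z] isos_mem[OF gI z]] by simp
  qed
qed

lemma H_ex:
  assumes i: "i \<in> I" and x: "x \<in> X i" and y: "y \<in> X i"
  shows "\<exists>f\<in>H1 I X (Mor1 R X Mor) i. f x = y"
proof -
  let ?M = "Mor1 R X Mor"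
  obtain j0 where j0: "j0 \<in> I" "j0 \<noteq> i" using other[OF i] by blast
  have ij0: "i \<noteq> j0" using j0(2) by simp
  have g0: "good ?M X i j0" using goodM1[OF i j0(1) ij0] .
  obtain b where b: "b \<in> ?M i j0" using M1ne[OF i j0(1) ij0] by blast
  have bI: "b \<in> isos X i j0" using good_iso[OF g0 b] .
  have by': "b y \<in> X j0" using isos_mem[OF bI y] .
  obtain c where c: "c \<in> ?M i j0" "c x = b y" using regset_ex[OF good_reg[OF g0] x by'] by blast
  have cI: "c \<in> isos X i j0" using good_iso[OF g0 c(1)] .
  define b' where "b' = iv X i j0 b"
  have b'M: "b' \<in> ?M j0 i" using good_inv[OF g0 b] unfolding b'_def .
  have b'I: "b' \<in> isos X j0 i" using iv_isos[OF bI] unfolding b'_def .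
  define f where "f = compose (X i) b' c"
  have fI: "f \<in> isos X i i" using compose_isos[OF cI b'I] unfolding f_def .
  have fx: "f x = y" unfolding f_def b'_def using x c(2) iv_left[OF bI y] by (simp add: compose_eq)
  have cP: "c \<in> X i \<rightarrow> X j0" by (intro funcsetI) (rule isos_mem[OF cI])
  have fH: "f \<in> H1 I X ?M i"
  proof (rule H_I[OF fI])
    fix j a assume j: "j \<in> I" "j \<noteq> i" and a: "a \<in> ?M i j"
    have ij: "i \<noteq> j" using j(2) by simp
    have aI: "a \<in> isos X i j" using good_iso[OF goodM1[OF i j(1) ij] a] .
    show "compose (X i) a f \<in> ?M i j"
    proof (cases "j = j0")
      case False
      have j0j: "j0 \<noteq> j" using False by simp
      have t1: "compose (X j0) a b' \<in> ?M j0 j"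
        using PM1[OF j0(1) i j(1) j0(2) ij j0j] b'M a unfolding Ptri_def by simp
      have t2: "compose (X i) (compose (X j0) a b') c \<in> ?M i j"
        using PM1[OF i j0(1) j(1) ij0 j0j ij] t1 c(1) unfolding Ptri_def by simp
      have "compose (X i) a f = compose (X i) (compose (X j0) a b') c"
        unfolding f_def by (rule compose_assoc[OF cP])
      then show ?thesis using t2 by simp
    next
      case True
      obtain l where l: "l \<in> I" "l \<noteq> i" "l \<noteq> j" using other2[OF i j(1)] by blast
      have jl: "j \<noteq> l" using l(3) by simp
      have il: "i \<noteq> l" using l(2) by simp
      have gjl: "good ?M X j l" using goodM1[OF j(1) l(1) jl] .
      obtain d where d: "d \<in> ?M j l" using M1ne[OF j(1) l(1) jl] by blast
      have dI: "d \<in> isos X j l" using good_iso[OF gjl d] .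
      have b'j: "b' \<in> ?M j i" using b'M True by simp
      have cj: "c \<in> ?M i j" using c(1) True by simp
      have b'Ij: "b' \<in> isos X j i" using b'I True by simp
      have cIj: "c \<in> isos X i j" using cI True by simp
      define t1 where "t1 = compose (X i) d a"
      have t1: "t1 \<in> ?M i l" using PM1[OF i j(1) l(1) ij jl il] a d unfolding Ptri_def t1_def by simp
      define t2 where "t2 = compose (X j) t1 b'"
      have t2: "t2 \<in> ?M j l" using PM1[OF j(1) i l(1) j(2) il jl] b'j t1 unfolding Ptri_def t2_def by simp
      define t3 where "t3 = compose (X i) t2 c"
      have t3: "t3 \<in> ?M i l" using PM1[OF i j(1) l(1) ij jl il] cj t2 unfolding Ptri_def t3_def by simp
      define d' where "d' = iv X j l d"
      have d': "d' \<in> ?M l j" using good_inv[OF gjl d] unfolding d'_def .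
      define t4 where "t4 = compose (X i) d' t3"
      have t4: "t4 \<in> ?M i j" using PM1[OF i l(1) j(1) il l(3) ij] t3 d' unfolding Ptri_def t4_def by simp
      have t4I: "t4 \<in> isos X i j" using good_iso[OF goodM1[OF i j(1) ij] t4] .
      have "compose (X i) a f = t4"
      proof (rule isos_eqI[OF compose_isos[OF fI aI] t4I])
        fix z assume z: "z \<in> X i"
        have cz: "c z \<in> X j" using isos_mem[OF cIj z] .
        have bcz: "b' (c z) \<in> X i" using isos_mem[OF b'Ij cz] .
        have abcz: "a (b' (c z)) \<in> X j" using isos_mem[OF aI bcz] .
        have "t4 z = d' (d (a (b' (c z))))"
          unfolding t4_def t3_def t2_def t1_def using z cz bcz by (simp add: compose_eq)
        also have "\<dots> = a (b' (c z))" unfolding d'_def using iv_left[OF dI abcz] .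
        finally show "compose (X i) a f z = t4 z" unfolding f_def using z cz by (simp add: compose_eq)
      qed
      then show ?thesis using t4 by simp
    qed
  qed
  show ?thesis using fH fx by blast
qed

lemma H_comp:
  assumes i: "i \<in> I" and f: "f \<in> H1 I X (Mor1 R X Mor) i" and g: "g \<in> H1 I X (Mor1 R X Mor) i"
  shows "compose (X i) g f \<in> H1 I X (Mor1 R X Mor) i"
proof (rule H_I)
  show "compose (X i) g f \<in> isos X i i" using compose_isos[OF H_mem(1)[OF f] H_mem(1)[OF g]] .
  fix j a assume j: "j \<in> I" "j \<noteq> i" and a: "a \<in> Mor1 R X Mor i j"
  have fP: "f \<in> X i \<rightarrow> X i" by (intro funcsetI) (rule isos_mem[OF H_mem(1)[OF f]])
  have "compose (X i) a (compose (X i) g f) = compose (X i) (compose (X i) a g) f"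
    by (rule compose_assoc[OF fP])
  moreover have "compose (X i) a g \<in> Mor1 R X Mor i j" using H_mem(2)[OF g j(1) j(2) a] .
  ultimately show "compose (X i) a (compose (X i) g f) \<in> Mor1 R X Mor i j"
    using H_mem(2)[OF f j(1) j(2)] by simp
qed

lemma H_inv:
  assumes i: "i \<in> I" and f: "f \<in> H1 I X (Mor1 R X Mor) i"
  shows "iv X i i f \<in> H1 I X (Mor1 R X Mor) i"
proof -
  have fI: "f \<in> isos X i i" using H_mem(1)[OF f] .
  obtain x where x: "x \<in> X i" using Xne[OF i] by blast
  have fx: "f x \<in> X i" using isos_mem[OF fI x] .
  obtain g where g: "g \<in> H1 I X (Mor1 R X Mor) i" "g (f x) = x" using H_ex[OF i fx x] by blast
  have gI: "g \<in> isos X i i" using H_mem(1)[OF g(1)] .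
  have gf: "compose (X i) g f \<in> H1 I X (Mor1 R X Mor) i" using H_comp[OF i f g(1)] .
  have "compose (X i) g f x = (\<lambda>x\<in>X i. x) x" using x g(2) by (simp add: compose_eq)
  then have gfid: "compose (X i) g f = (\<lambda>x\<in>X i. x)" using H_uniq[OF i gf H_id[OF i] x] by simp
  have "g = iv X i i f"
  proof (rule isos_eqI[OF gI iv_isos[OF fI]])
    fix y assume y: "y \<in> X i"
    have iy: "iv X i i f y \<in> X i" using isos_mem[OF iv_isos[OF fI] y] .
    have "compose (X i) g f (iv X i i f y) = iv X i i f y" using gfid iy by simp
    then have "g (f (iv X i i f y)) = iv X i i f y" using iy by (simp add: compose_eq)
    then show "g y = iv X i i f y" using iv_right[OF fI y] by simp
  qed
  then show ?thesis using g(1) by simp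
qed

lemma H_reg: assumes i: "i \<in> I" shows "regset X i i (H1 I X (Mor1 R X Mor) i)"
proof (rule regsetI)
  show "H1 I X (Mor1 R X Mor) i \<subseteq> isos X i i" by (rule subsetI) (erule H_mem(1))
  fix x y assume "x \<in> X i" "y \<in> X i"
  then show "\<exists>f\<in>H1 I X (Mor1 R X Mor) i. f x = y" using H_ex[OF i] by blast
next
  fix f g x assume "f \<in> H1 I X (Mor1 R X Mor) i" "g \<in> H1 I X (Mor1 R X Mor) i" "x \<in> X i" "f x = g x"
  then show "f = g" using H_uniq[OF i] by blast
qed

lemma good2: assumes i: "i \<in> I" and j: "j \<in> I" shows "good (Mor2 I X (Mor1 R X Mor)) X i j"
proof (cases "i = j")
  case True
  show ?thesis unfolding good_def Mor2_def using True H_reg[OF i] H_inv[OF i] by simp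
next
  case False
  have "good (Mor1 R X Mor) X i j" using goodM1[OF i j False] .
  then show ?thesis unfolding good_def Mor2_def using False by simp
qed

lemma Pbase:
  assumes i: "i \<in> I" and j: "j \<in> I" and k: "k \<in> I" and c: "i = j \<or> (i \<noteq> j \<and> j \<noteq> k \<and> i \<noteq> k)"
  shows "Ptri (Mor2 I X (Mor1 R X Mor)) X i j k"
proof (cases "i = j")
  case ij: True
  show ?thesis
  proof (cases "j = k")
    case True
    then show ?thesis unfolding Ptri_def Mor2_def using ij H_comp[OF i] by simp
  next
    case False
    have "\<forall>f\<in>H1 I X (Mor1 R X Mor) i. \<forall>g\<in>Mor1 R X Mor i k. compose (X i) g f \<in> Mor1 R X Mor i k"
    proof (intro ballI)
      fix f g assume f: "f \<in> H1 I X (Mor1 R X Mor) i" and g: "g \<in> Mor1 R X Mor i k"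
      have ki: "k \<noteq> i" using False ij by simp
      show "compose (X i) g f \<in> Mor1 R X Mor i k" using H_mem(2)[OF f k ki g] .
    qed
    then show ?thesis unfolding Ptri_def Mor2_def using ij False by simp
  qed
next
  case False
  then have d: "i \<noteq> j" "j \<noteq> k" "i \<noteq> k" using c by simp_all
  show ?thesis using PM1[OF i j k d] d unfolding Ptri_def Mor2_def by simp
qed

lemma Ptri2: assumes i: "i \<in> I" and j: "j \<in> I" and k: "k \<in> I"
  shows "Ptri (Mor2 I X (Mor1 R X Mor)) X i j k"
proof -
  have g6: "good6 (Mor2 I X (Mor1 R X Mor)) X i j k" unfolding good6_def
    using good2[OF i j] good2[OF j i] good2[OF j k] good2[OF k j] good2[OF i k] good2[OF k i]
      Xne[OF i] Xne[OF j] Xne[OF k] by simp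
  show ?thesis
  proof (rule perm_all[OF g6])
    show "Ptri (Mor2 I X (Mor1 R X Mor)) X i j k \<or> Ptri (Mor2 I X (Mor1 R X Mor)) X i k j \<or>
      Ptri (Mor2 I X (Mor1 R X Mor)) X j i k \<or> Ptri (Mor2 I X (Mor1 R X Mor)) X j k i \<or>
      Ptri (Mor2 I X (Mor1 R X Mor)) X k i j \<or> Ptri (Mor2 I X (Mor1 R X Mor)) X k j i"
    proof (cases "i = j")
      case True then show ?thesis using Pbase[OF i j k] by simp
    next
      case nij: False
      show ?thesis
      proof (cases "j = k")
        case True then show ?thesis using Pbase[OF k j i] by simp
      next
        case njk: False
        show ?thesis
        proof (cases "i = k")
          case True then show ?thesis using Pbase[OF i k j] by simp
        next
          case False then show ?thesis using Pbase[OF i j k] nij njk by simp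
        qed
      qed
    qed
  qed
qed

lemma spine2: "groupoid_spine I lt X (I \<times> I) (Mor2 I X (Mor1 R X Mor))"
proof -
  let ?S = "I \<times> I"
  let ?M = "Mor2 I X (Mor1 R X Mor)"
  have h1: "strict_linear_on I lt" by (rule lin)
  have h2: "\<forall>i\<in>I. X i \<noteq> {}" using Xne by blast
  have h3: "?S \<noteq> {}" using Rne Rsub by blast
  have h4: "?S \<subseteq> I \<times> I" by simp
  have h5: "\<forall>i\<in>I. \<forall>j\<in>I. lt i j \<longrightarrow> (i, j) \<in> ?S" by simp
  have h6': "?M i j \<noteq> {} \<and> (\<forall>f\<in>?M i j. f \<in> extensional (X i) \<and> bij_betw f (X i) (X j))"
    if ij: "(i, j) \<in> ?S" for i j
  proof -
    have I: "i \<in> I" "j \<in> I" using ij by auto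
    have r: "regset X i j (?M i j)" using good_reg[OF good2[OF I]] .
    obtain x where x: "x \<in> X i" using Xne[OF I(1)] by blast
    obtain y where y: "y \<in> X j" using Xne[OF I(2)] by blast
    have "?M i j \<noteq> {}" using regset_ex[OF r x y] by blast
    moreover have "\<forall>f\<in>?M i j. f \<in> extensional (X i) \<and> bij_betw f (X i) (X j)"
      using regset_sub[OF r] unfolding isos_def by blast
    ultimately show ?thesis by simp
  qed
  have h6: "\<forall>(i, j)\<in>?S. ?M i j \<noteq> {} \<and> (\<forall>f\<in>?M i j. f \<in> extensional (X i) \<and> bij_betw f (X i) (X j))"
    apply (rule ballI)
    apply (subst case_prod_beta)
    apply (rule h6')
    apply simp
    done
  have h7: "\<forall>i. (i, i) \<in> ?S \<longrightarrow> (\<lambda>x\<in>X i. x) \<in> ?M i i"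
  proof (intro allI impI)
    fix i assume "(i, i) \<in> ?S"
    then have i: "i \<in> I" by simp
    show "(\<lambda>x\<in>X i. x) \<in> ?M i i" using H_id[OF i] unfolding Mor2_def by simp
  qed
  have h8: "\<forall>i j. (i, j) \<in> ?S \<longrightarrow> (j, i) \<in> ?S \<longrightarrow>
        (\<forall>f\<in>?M i j. restrict (inv_into (X i) f) (X j) \<in> ?M j i)"
  proof (intro allI impI)
    fix i j assume ij: "(i, j) \<in> ?S" and "(j, i) \<in> ?S"
    then have I: "i \<in> I" "j \<in> I" by auto
    show "\<forall>f\<in>?M i j. restrict (inv_into (X i) f) (X j) \<in> ?M j i"
      using good_inv[OF good2[OF I]] unfolding iv_def by blast
  qed
  have h9: "\<forall>i j k. (i, j) \<in> ?S \<longrightarrow> (j, k) \<in> ?S \<longrightarrow> (i, k) \<in> ?S \<longrightarrow>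
        (\<forall>f\<in>?M i j. \<forall>g\<in>?M j k. compose (X i) g f \<in> ?M i k)"
  proof (intro allI impI)
    fix i j k assume a: "(i, j) \<in> ?S" and b: "(j, k) \<in> ?S" and c: "(i, k) \<in> ?S"
    then have I: "i \<in> I" "j \<in> I" "k \<in> I" by auto
    show "\<forall>f\<in>?M i j. \<forall>g\<in>?M j k. compose (X i) g f \<in> ?M i k"
      using Ptri2[OF I] unfolding Ptri_def .
  qed
  show ?thesis unfolding groupoid_spine_def
    by (intro conjI h1 h2 h3 h4 h5 h6 h7 h8 h9)
qed

lemma agree: assumes ij: "(i, j) \<in> R" shows "Mor2 I X (Mor1 R X Mor) i j = Mor i j"
proof (cases "i = j")
  case False
  then show ?thesis unfolding Mor2_def using Mor1_R[OF ij] by simp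
next
  case True
  have ii: "(i, i) \<in> R" using ij True by simp
  have i: "i \<in> I" using RI[OF ii] by simp
  have sub: "Mor i i \<subseteq> H1 I X (Mor1 R X Mor) i"
  proof
    fix g assume g: "g \<in> Mor i i"
    show "g \<in> H1 I X (Mor1 R X Mor) i"
    proof (rule H_I)
      show "g \<in> isos X i i" using regset_sub[OF Mreg[OF ii] g] .
      fix k a assume k: "k \<in> I" "k \<noteq> i" and a: "a \<in> Mor1 R X Mor i k"
      have ik: "i \<noteq> k" using k(2) by simp
      have S1: "(i, i) \<in> R \<union> converse R" using ii by blast
      have S2: "(i, k) \<in> R \<union> converse R" using offS[OF i k(1) ik] .
      have gM: "g \<in> Mor1 R X Mor i i" using g Mor1_R[OF ii] by simp
      show "compose (X i) a g \<in> Mor1 R X Mor i k"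
        using comp1[OF S1 S2 S2] gM a unfolding Ptri_def by blast
    qed
  qed
  have "Mor i i = H1 I X (Mor1 R X Mor) i"
    by (rule regset_eq[OF Xne[OF i] Mreg[OF ii] H_reg[OF i] sub])
  then show ?thesis unfolding Mor2_def using True by simp
qed

lemma part2: "extends_to_groupoid I lt X R Mor"
  unfolding extends_to_groupoid_def extends_to_def
proof (intro exI conjI)
  show "\<forall>(i, j)\<in>R. Mor2 I X (Mor1 R X Mor) i j = Mor i j"
    apply (rule ballI)
    apply (subst case_prod_beta)
    apply (rule agree)
    apply simp
    done
  show "groupoid_spine I lt X (I \<times> I) (Mor2 I X (Mor1 R X Mor))" by (rule spine2)
qed

end

end

theorem theorem7p7:
  fixes I :: "'i set" and lt :: "'i \<Rightarrow> 'i \<Rightarrow> bool" and X :: "'i \<Rightarrow> 'x set"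
    and R :: "('i \<times> 'i) set" and Mor :: "'i \<Rightarrow> 'i \<Rightarrow> ('x \<Rightarrow> 'x) set"
  assumes "regular_spine I lt X R Mor"
  shows "(\<exists>S. sym S \<and> R \<subseteq> S \<and> S \<subseteq> I \<times> I \<and> extends_to I lt X R Mor S)
       \<and> ((infinite I \<or> 3 \<le> card I) \<longrightarrow> extends_to_groupoid I lt X R Mor)"
proof (intro conjI impI)
  show "\<exists>S. sym S \<and> R \<subseteq> S \<and> S \<subseteq> I \<times> I \<and> extends_to I lt X R Mor S"
    by (rule part1[OF assms])
  assume c: "infinite I \<or> 3 \<le> card I"
  show "extends_to_groupoid I lt X R Mor" by (rule part2[OF assms three_lemma[OF c]])
qed

end
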